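(* Consider the replace-after-random-time process with failure rate $\lambda>0$ and replacement-time density $f$. If there exist $\epsilon>0$ and $\delta>0$ such that $f(r)<r^{\epsilon}$ for all $0<r<\delta$, then $E[N(t)]<\infty$ for every $t>0$.
   Context: Let $X_1,X_2,\ldots$ be independent random variables, each exponentially distributed with rate $\lambda>0$ (density $\lambda e^{-\lambda x}$ for $x>0$). Let $R$ be a random variable, independent of $X_1,X_2,\ldots$, with an absolutely continuous distribution on $(0,\infty)$ with probability density function $f$. For $t\ge0$ define $N(t)=\max\{n\ge0:\sum_{k=1}^n\min(X_k,R)\le t\}$; $\{N(t)\}$ is called the replace-after-random-time (RaRT) process. *)

theory Defs
  imports "HOL-Probability.Probability"
begin

text \<open>The inter-renewal times X_1, X_2, ... are indexed here from 0, i.e. X 0, X 1, ...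
  N(t) = max {n \<ge> 0. sum_{k<n} min (X k) R \<le> t}, taken as a supremum in ennreal
  (which equals the maximum whenever the set is finite).\<close>
definition RaRT_count ::
  "(nat \<Rightarrow> 'a \<Rightarrow> real) \<Rightarrow> ('a \<Rightarrow> real) \<Rightarrow> real \<Rightarrow> 'a \<Rightarrow> ennreal" where
  "RaRT_count X R t \<omega> =
     Sup {of_nat n | n. (\<Sum>k<n. min (X k \<omega>) (R \<omega>)) \<le> t}"

end

theory Submission
  imports Defs
begin

lemma distributed_AE_notin:
  fixes X :: "'a \<Rightarrow> real" and g :: "real \<Rightarrow> ennreal"
  assumes D: "distributed M lborel X g" and z: "\<And>x. x \<in> A \<Longrightarrow> g x = 0" and A: "A \<in> sets borel"
  shows "AE \<omega> in M. X \<omega> \<notin> A"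
proof (rule AE_I')
  have "emeasure M (X -` A \<inter> space M) = (\<integral>\<^sup>+x. g x * indicator A x \<partial>lborel)"
    using D A by (intro distributed_emeasure) auto
  also have "\<dots> = 0"
    by (intro nn_integral_zero' AE_I2) (auto simp: z indicator_def)
  finally have "emeasure M (X -` A \<inter> space M) = 0" .
  moreover have "X -` A \<inter> space M \<in> sets M"
    using A by (intro measurable_sets[OF distributed_measurable[OF D]]) simp
  ultimately show "X -` A \<inter> space M \<in> null_sets M" by (rule null_setsI)
qed blast

lemma (in prob_space) phi_bound:
  fixes X :: "'a \<Rightarrow> real"
  assumes D: "distributed M lborel X (exponential_density l)" and l: "0 < l" and s: "0 < s"
  shows "(\<integral>\<^sup>+\<omega>. ennreal (exp (- min (X \<omega>) s)) \<partial>M) \<le> ennreal (1 - (1 - exp (- s)) * exp (- s * l))"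
proof -
  define c where "c = 1 - exp (- s)"
  define A where "A = {x\<in>space M. s < X x}"
  have Xm0: "X \<in> measurable M lborel" by (rule distributed_measurable[OF D])
  have Xm[measurable]: "X \<in> borel_measurable M"
    using Xm0 by simp
  have Asets: "A \<in> sets M" unfolding A_def by measurable
  have c: "0 \<le> c" "c \<le> 1" using s by (auto simp: c_def)
  have nonneg: "AE \<omega> in M. X \<omega> \<notin> {..<0}"
    by (rule distributed_AE_notin[OF D]) (auto simp: exponential_density_def)
  have step1: "(\<integral>\<^sup>+\<omega>. ennreal (exp (- min (X \<omega>) s)) \<partial>M) \<le> (\<integral>\<^sup>+\<omega>. ennreal (1 - c * indicator A \<omega>) \<partial>M)"
  proof (rule nn_integral_mono_AE)
    show "AE \<omega> in M. ennreal (exp (- min (X \<omega>) s)) \<le> ennreal (1 - c * indicator A \<omega>)"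
      using nonneg
    proof eventually_elim
      case (elim \<omega>)
      show ?case
      proof (cases "\<omega> \<in> A")
        case True
        then have "s < X \<omega>" by (simp add: A_def)
        then have "exp (- min (X \<omega>) s) = 1 - c * indicator A \<omega>"
          using True by (simp add: c_def)
        then show ?thesis by simp
      next
        case False
        have "0 \<le> min (X \<omega>) s" using elim s by simp
        then have "exp (- min (X \<omega>) s) \<le> 1" by simp
        also have "1 = 1 - c * indicator A \<omega>" using False by simp
        finally show ?thesis by (rule ennreal_leI)
      qed
    qed
  qed
  have int1: "integrable M (\<lambda>\<omega>. c * indicator A \<omega>)"
    using Asets by (intro integrable_real_mult_indicator) auto
  have int: "integrable M (\<lambda>\<omega>. 1 - c * indicator A \<omega>)"
    by (intro Bochner_Integration.integrable_diff integrable_const int1)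
  have step2: "(\<integral>\<^sup>+\<omega>. ennreal (1 - c * indicator A \<omega>) \<partial>M) = ennreal (\<integral>\<omega>. 1 - c * indicator A \<omega> \<partial>M)"
  proof (rule nn_integral_eq_integral[OF int])
    show "AE \<omega> in M. 0 \<le> 1 - c * indicator A \<omega>"
      by (rule AE_I2) (use c in \<open>simp add: indicator_def\<close>)
  qed
  have step3: "(\<integral>\<omega>. 1 - c * indicator A \<omega> \<partial>M) = (\<integral>\<omega>. 1 \<partial>M) - (\<integral>\<omega>. c * indicator A \<omega> \<partial>M)"
    by (rule Bochner_Integration.integral_diff[OF integrable_const int1])
  have step4: "(\<integral>\<omega>. c * indicator A \<omega> \<partial>M) = c * prob A"
    using Asets by simp
  have step5: "(\<integral>\<omega>. 1 \<partial>M) = (1::real)"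
    by (simp add: prob_space)
  have step6: "prob A = exp (- s * l)"
    unfolding A_def by (rule exponential_distributedD_gt[OF D _ l]) (use s in simp)
  have "(\<integral>\<omega>. 1 - c * indicator A \<omega> \<partial>M) = 1 - c * exp (- s * l)"
    using step3 step4 step5 step6 by simp
  with step1 step2 show ?thesis by (simp add: c_def)
qed


lemma bucket_exists:
  fixes a r :: real
  assumes a: "0 < a" and r: "0 < r"
  shows "\<exists>j. (j = 0 \<and> a \<le> r) \<or> (0 < j \<and> a / 2^j \<le> r \<and> r < 2 * (a / 2^j))"
proof (cases "a \<le> r")
  case True then show ?thesis by auto
next
  case False
  obtain n where n: "(1/2::real)^n < r / a" using real_arch_pow_inv[of "r/a" "1/2"] a r by auto
  have ex: "\<exists>n. a / 2^n \<le> r"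
  proof
    have "a * (1/2)^n < a * (r / a)" using n a by (intro mult_strict_left_mono) auto
    then show "a / 2^n \<le> r" using a by (simp add: power_one_over field_simps)
  qed
  define j where "j = (LEAST n. a / 2^n \<le> (r::real))"
  have j1: "a / 2^j \<le> r" unfolding j_def by (rule LeastI_ex[OF ex])
  have j0: "0 < j" using j1 False by (cases j) auto
  then obtain i where i: "j = Suc i" by (cases j) auto
  have "\<not> (a / 2^i \<le> r)"
  proof
    assume "a / 2^i \<le> r"
    then have "j \<le> i" unfolding j_def by (rule Least_le)
    then show False using i by simp
  qed
  then have "r < 2 * (a / 2^j)" using i by (simp add: field_simps)
  then show ?thesis using j1 j0 by blast
qed

lemma geo_ennreal:
  fixes c q :: real
  assumes c: "0 \<le> c" and q: "0 \<le> q" "q < 1"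
  shows "(\<Sum>m. ennreal (c * q^m)) = ennreal (c / (1 - q))"
proof -
  have sm: "summable (\<lambda>m. c * q^m)" using q by (intro summable_mult summable_geometric) auto
  have "(\<Sum>m. ennreal (c * q^m)) = ennreal (\<Sum>m. c * q^m)"
    using c q sm by (intro suminf_ennreal2) auto
  also have "(\<Sum>m. c * q^m) = c / (1 - q)"
    using q by (simp add: suminf_mult suminf_geometric divide_simps)
  finally show ?thesis .
qed

lemma gap_bound:
  fixes s l :: real
  assumes s: "0 < s" "s \<le> 1" and l: "0 < l"
  shows "s / (2 * exp l) \<le> (1 - exp (- s)) * exp (- s * l)"
proof -
  have e1: "1 + s \<le> exp s" by (rule exp_ge_add_one_self)
  have "exp (- s) = 1 / exp s" by (simp add: exp_minus field_simps)
  also have "\<dots> \<le> 1 / (1 + s)" using e1 s by (intro divide_left_mono) auto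
  also have "1 / (1 + s) \<le> 1 - s / 2"
  proof -
    have h: "0 \<le> s * (1 - s)" using s by simp
    have "1 \<le> (1 - s / 2) * (1 + s)" using h by (simp add: algebra_simps)
    then show ?thesis using s by (simp add: divide_le_eq)
  qed
  finally have "s / 2 \<le> 1 - exp (- s)" by simp
  moreover have "exp (- l) \<le> exp (- s * l)" using s l by (simp add: mult_left_le_one_le)
  moreover have "0 \<le> s / 2" "0 < exp (-l)" using s by auto
  ultimately have "s / 2 * exp (- l) \<le> (1 - exp (- s)) * exp (- s * l)"
    by (intro mult_mono) auto
  then show ?thesis by (simp add: exp_minus field_simps)
qed

lemma (in prob_space) indep_expect:
  fixes X :: "nat \<Rightarrow> 'a \<Rightarrow> real" and R :: "'a \<Rightarrow> real"
  assumes indep: "indep_vars (\<lambda>_. borel) (\<lambda>i. case i of None \<Rightarrow> R | Some k \<Rightarrow> X k) UNIV"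
    and B: "B \<in> sets borel"
  shows "(\<integral>\<^sup>+\<omega>. ennreal (indicator B (R \<omega>) * (\<Prod>k<m. exp(- min (X k \<omega>) s))) \<partial>M)
     = emeasure M (R -` B \<inter> space M) * (\<Prod>k<m. \<integral>\<^sup>+\<omega>. ennreal (exp(- min (X k \<omega>) s)) \<partial>M)"
proof -
  define Y where "Y i = (case i of None \<Rightarrow> (\<lambda>x. ennreal (indicator B x)) | Some k \<Rightarrow> (\<lambda>x. ennreal (exp (- min x s))))" for i :: "nat option"
  define I where "I = insert None (Some ` {..<m})"
  have ind2: "indep_vars (\<lambda>_. borel) (\<lambda>i x. Y i ((case i of None \<Rightarrow> R | Some k \<Rightarrow> X k) x)) UNIV"
    by (rule indep_vars_compose2[OF indep]) (auto simp: Y_def B borel_measurable_indicator split: option.splits)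
  have ind3: "indep_vars (\<lambda>_. borel) (\<lambda>i x. Y i ((case i of None \<Rightarrow> R | Some k \<Rightarrow> X k) x)) I"
    by (rule indep_vars_subset[OF ind2]) auto
  have fin: "finite I" by (simp add: I_def)
  have eq: "(\<integral>\<^sup>+\<omega>. (\<Prod>i\<in>I. Y i ((case i of None \<Rightarrow> R | Some k \<Rightarrow> X k) \<omega>)) \<partial>M)
      = (\<Prod>i\<in>I. \<integral>\<^sup>+\<omega>. (Y i ((case i of None \<Rightarrow> R | Some k \<Rightarrow> X k) \<omega>)) \<partial>M)"
    by (rule indep_vars_nn_integral[OF fin ind3]) (auto simp: Y_def split: option.splits)
  have nn: "None \<notin> Some ` {..<m}" by auto
  have lhs: "(\<Prod>i\<in>I. Y i ((case i of None \<Rightarrow> R | Some k \<Rightarrow> X k) \<omega>))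
     = ennreal (indicator B (R \<omega>) * (\<Prod>k<m. exp(- min (X k \<omega>) s)))" for \<omega>
    unfolding I_def by (simp add: prod.insert[OF _ nn] prod.reindex Y_def prod_ennreal ennreal_mult' prod_nonneg)
  have rhs: "(\<Prod>i\<in>I. \<integral>\<^sup>+\<omega>. (Y i ((case i of None \<Rightarrow> R | Some k \<Rightarrow> X k) \<omega>)) \<partial>M)
     = (\<integral>\<^sup>+\<omega>. ennreal (indicator B (R \<omega>)) \<partial>M) * (\<Prod>k<m. \<integral>\<^sup>+\<omega>. ennreal (exp(- min (X k \<omega>) s)) \<partial>M)"
    unfolding I_def by (simp add: prod.insert[OF _ nn] prod.reindex Y_def)
  have rv: "R \<in> borel_measurable M"
    using indep unfolding indep_vars_def by (metis option.simps(4) UNIV_I)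
  have "(\<integral>\<^sup>+\<omega>. ennreal (indicator B (R \<omega>)) \<partial>M) = (\<integral>\<^sup>+\<omega>. indicator (R -` B \<inter> space M) \<omega> \<partial>M)"
    by (rule nn_integral_cong) (auto simp: indicator_def)
  also have "\<dots> = emeasure M (R -` B \<inter> space M)"
    using rv B by (intro nn_integral_indicator) measurable
  finally show ?thesis using eq lhs rhs by simp
qed

lemma count_bound:
  fixes x :: "nat \<Rightarrow> real" and r s t :: real
  assumes x: "\<And>k. 0 \<le> x k" and r: "0 \<le> r" and sr: "s \<le> r"
  shows "Sup {of_nat n | n. (\<Sum>k<n. min (x k) r) \<le> t}
         \<le> (\<Sum>m. ennreal (exp t * (\<Prod>k<m. exp (- min (x k) s))))"
proof (rule Sup_least, clarify)
  fix n assume n: "(\<Sum>k<n. min (x k) r) \<le> t"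
  have "(of_nat n :: ennreal) = (\<Sum>m<n. ennreal 1)" by simp
  also have "\<dots> \<le> (\<Sum>m<n. ennreal (exp t * (\<Prod>k<m. exp (- min (x k) s))))"
  proof (rule sum_mono)
    fix m assume m: "m \<in> {..<n}"
    have "(\<Sum>k<m. min (x k) s) \<le> (\<Sum>k<m. min (x k) r)"
      by (rule sum_mono) (use sr in auto)
    also have "\<dots> \<le> (\<Sum>k<n. min (x k) r)"
      by (rule sum_mono2) (use m x r in auto)
    finally have "(\<Sum>k<m. min (x k) s) \<le> t" using n by linarith
    hence "1 \<le> exp (t - (\<Sum>k<m. min (x k) s))" by simp
    also have "exp (t - (\<Sum>k<m. min (x k) s)) = exp t * (\<Prod>k<m. exp (- min (x k) s))"
      by (simp add: exp_diff exp_sum exp_minus prod_dividef field_simps)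
    finally show "ennreal 1 \<le> ennreal (exp t * (\<Prod>k<m. exp (- min (x k) s)))"
      by (rule ennreal_leI)
  qed
  also have "\<dots> \<le> (\<Sum>m. ennreal (exp t * (\<Prod>k<m. exp (- min (x k) s))))"
    by (rule sum_le_suminf) (auto intro: summableI)
  finally show "of_nat n \<le> (\<Sum>m. ennreal (exp t * (\<Prod>k<m. exp (- min (x k) s))))" .
qed

lemma ennreal_le_suminf1:
  fixes f :: "nat \<Rightarrow> ennreal"
  shows "f j \<le> suminf f"
proof -
  have "sum f {j} \<le> suminf f" by (rule sum_le_suminf) (auto intro: summableI)
  then show ?thesis by simp
qed

lemma pow_powr2: "((2::real)^j) powr e = (2 powr e)^j"
  by (simp add: powr_realpow[symmetric] powr_powr powr_power mult.commute)
theorem mainTheorem11: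
  fixes M :: "'a measure"
    and X :: "nat \<Rightarrow> 'a \<Rightarrow> real"
    and R :: "'a \<Rightarrow> real"
    and f :: "real \<Rightarrow> real"
    and l :: real
  assumes "prob_space M"
    and "l > 0"
    and "\<And>k. distributed M lborel (X k) (\<lambda>x. ennreal (exponential_density l x))"
    and "distributed M lborel R (\<lambda>x. ennreal (f x))"
    and "\<And>x. f x \<ge> 0"
    and "\<And>x. x \<le> 0 \<Longrightarrow> f x = 0"
    and "prob_space.indep_vars M (\<lambda>_. borel)
           (\<lambda>i. case i of None \<Rightarrow> R | Some k \<Rightarrow> X k) UNIV"
    and "\<exists>\<epsilon>>0. \<exists>\<delta>>0. \<forall>r. 0 < r \<and> r < \<delta> \<longrightarrow> f r < r powr \<epsilon>"
  shows "\<forall>t>0. (\<integral>\<^sup>+ \<omega>. RaRT_count X R t \<omega> \<partial>M) < \<infinity>"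
proof (intro allI impI)
  fix t :: real assume t: "0 < t"
  interpret P: prob_space M by (rule assms(1))
  note l = assms(2)
  note DX = assms(3)
  note DR = assms(4)
  from assms(8) obtain \<epsilon> \<delta> where ep: "0 < \<epsilon>" and de: "0 < \<delta>"
    and fb: "\<And>r. 0 < r \<Longrightarrow> r < \<delta> \<Longrightarrow> f r < r powr \<epsilon>" by blast
  define a where "a = min 1 (\<delta>/2)"
  have a: "0 < a" "a \<le> 1" "a < \<delta>" using de by (auto simp: a_def)
  define s where "s j = a / 2^j" for j :: nat
  define B where "B j = (if j = 0 then {a..} else {s j ..< 2 * s j})" for j
  define q where "q j = 1 - (1 - exp (- s j)) * exp (- s j * l)" for j
  define p where "p j = (if j = 0 then 1 else (2 * s j) powr \<epsilon> * s j)" for j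
  define \<rho> where "\<rho> = 1 / 2 powr \<epsilon>"
  define K where "K = 2 * exp (t + l) * (1/a + (2*a) powr \<epsilon>)"
  have s_pos: "0 < s j" for j using a by (simp add: s_def)
  have s_le: "s j \<le> a" for j using a by (simp add: s_def divide_le_eq)
  have s_le1: "s j \<le> 1" for j using s_le[of j] a by simp
  have Bsets[measurable]: "B j \<in> sets borel" for j by (simp add: B_def)
  have Rm[measurable]: "R \<in> borel_measurable M"
    using distributed_measurable[OF DR] by simp
  have Xm[measurable]: "X k \<in> borel_measurable M" for k
    using distributed_measurable[OF DX[of k]] by simp
  define T where "T j m \<omega> = ennreal (indicator (B j) (R \<omega>) * (exp t * (\<Prod>k<m. exp (- min (X k \<omega>) (s j)))))" for j m \<omega>
  define W where "W \<omega> = (\<Sum>j. \<Sum>m. T j m \<omega>)" for \<omega>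
  have Tm[measurable]: "T j m \<in> borel_measurable M" for j m
    unfolding T_def by measurable
  have AE_R: "AE \<omega> in M. R \<omega> \<notin> {..0}"
    by (rule distributed_AE_notin[OF DR]) (auto simp: assms(6))
  have AE_X: "AE \<omega> in M. \<forall>k. X k \<omega> \<notin> {..<0}"
    unfolding AE_all_countable
    by (intro allI distributed_AE_notin[OF DX]) (auto simp: exponential_density_def)
  have stepA: "(\<integral>\<^sup>+\<omega>. RaRT_count X R t \<omega> \<partial>M) \<le> (\<integral>\<^sup>+\<omega>. W \<omega> \<partial>M)"
  proof (rule nn_integral_mono_AE)
    show "AE \<omega> in M. RaRT_count X R t \<omega> \<le> W \<omega>" using AE_R AE_X
    proof eventually_elim
      case (elim \<omega>)
      have r: "0 < R \<omega>" using elim by auto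
      have x: "\<And>k. 0 \<le> X k \<omega>" using elim by (simp add: not_less)
      obtain j where j: "R \<omega> \<in> B j" and sj: "s j \<le> R \<omega>"
      proof -
        from bucket_exists[OF a(1) r] obtain j where
          "(j = 0 \<and> a \<le> R \<omega>) \<or> (0 < j \<and> a / 2^j \<le> R \<omega> \<and> R \<omega> < 2 * (a / 2^j))" by blast
        then show ?thesis
          by (intro that[of j]) (auto simp: B_def s_def)
      qed
      have "RaRT_count X R t \<omega> \<le> (\<Sum>m. ennreal (exp t * (\<Prod>k<m. exp (- min (X k \<omega>) (s j)))))"
        unfolding RaRT_count_def by (rule count_bound[OF x _ sj]) (use r in simp)
      also have "\<dots> = (\<Sum>m. T j m \<omega>)" using j by (simp add: T_def)
      also have "\<dots> \<le> W \<omega>" unfolding W_def by (rule ennreal_le_suminf1[of "\<lambda>j. \<Sum>m. T j m \<omega>"])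
      finally show ?case .
    qed
  qed
  have stepB: "(\<integral>\<^sup>+\<omega>. W \<omega> \<partial>M) = (\<Sum>j. \<Sum>m. \<integral>\<^sup>+\<omega>. T j m \<omega> \<partial>M)"
  proof -
    have "(\<integral>\<^sup>+\<omega>. W \<omega> \<partial>M) = (\<Sum>j. \<integral>\<^sup>+\<omega>. (\<Sum>m. T j m \<omega>) \<partial>M)"
      unfolding W_def by (rule nn_integral_suminf) measurable
    also have "\<dots> = (\<Sum>j. \<Sum>m. \<integral>\<^sup>+\<omega>. T j m \<omega> \<partial>M)"
      by (intro suminf_cong nn_integral_suminf Tm)
    finally show ?thesis .
  qed
  have q_ge: "s j / (2 * exp l) \<le> 1 - q j" for j
    using gap_bound[OF s_pos s_le1 l] by (simp add: q_def)
  have q_pos: "0 < 1 - q j" for j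
    using q_ge[of j] s_pos[of j] by (smt (verit) divide_pos_pos exp_gt_zero)
  have q_nonneg: "0 \<le> q j" for j
  proof -
    have "(1 - exp (- s j)) \<le> 1" "exp (- s j * l) \<le> 1" "0 \<le> exp (- s j * l)"
      using s_pos[of j] l by auto
    then have "(1 - exp (- s j)) * exp (- s j * l) \<le> 1 * 1"
      by (intro mult_mono) (use s_pos[of j] in auto)
    then show ?thesis by (simp add: q_def)
  qed
  have p_nonneg: "0 \<le> p j" for j using s_pos[of j] by (simp add: p_def)
  have stepD: "emeasure M (R -` B j \<inter> space M) \<le> ennreal (p j)" for j
  proof (cases "j = 0")
    case True
    then show ?thesis using P.emeasure_le_1 by (simp add: p_def)
  next
    case False
    have Bj: "B j = {s j ..< 2 * s j}" using False by (simp add: B_def)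
    have two: "2 * s j \<le> a"
      using False a by (cases j) (auto simp: s_def field_simps)
    have "emeasure M (R -` B j \<inter> space M) = (\<integral>\<^sup>+x. ennreal (f x) * indicator (B j) x \<partial>lborel)"
      by (rule distributed_emeasure[OF DR]) simp
    also have "\<dots> \<le> (\<integral>\<^sup>+x. ennreal ((2 * s j) powr \<epsilon>) * indicator {s j ..< 2 * s j} x \<partial>lborel)"
    proof (rule nn_integral_mono)
      fix x
      show "ennreal (f x) * indicator (B j) x \<le> ennreal ((2 * s j) powr \<epsilon>) * indicator {s j ..< 2 * s j} x"
      proof (cases "x \<in> B j")
        case True
        then have x1: "s j \<le> x" "x < 2 * s j" using Bj by auto
        have "f x < x powr \<epsilon>" using fb[of x] x1 s_pos[of j] two a by auto
        also have "x powr \<epsilon> \<le> (2 * s j) powr \<epsilon>"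
          using x1 s_pos[of j] ep by (intro powr_mono2) auto
        finally show ?thesis using True Bj by (auto intro: ennreal_leI)
      next
        case False
        then show ?thesis by simp
      qed
    qed
    also have "\<dots> = ennreal ((2 * s j) powr \<epsilon>) * emeasure lborel {s j ..< 2 * s j}"
      by (rule nn_integral_cmult_indicator) simp
    also have "\<dots> = ennreal ((2 * s j) powr \<epsilon>) * ennreal (s j)"
      using s_pos[of j] by simp
    also have "\<dots> = ennreal (p j)"
      using False s_pos[of j] by (simp add: p_def ennreal_mult)
    finally show ?thesis .
  qed
  have stepC: "(\<integral>\<^sup>+\<omega>. T j m \<omega> \<partial>M) \<le> ennreal (exp t * p j * q j ^ m)" for j m
  proof -
    have eq: "T j m \<omega> = ennreal (exp t) * ennreal (indicator (B j) (R \<omega>) * (\<Prod>k<m. exp (- min (X k \<omega>) (s j))))" for \<omega>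
    proof -
      have "indicator (B j) (R \<omega>) * (exp t * (\<Prod>k<m. exp (- min (X k \<omega>) (s j))))
          = exp t * (indicator (B j) (R \<omega>) * (\<Prod>k<m. exp (- min (X k \<omega>) (s j))))" by simp
      then show ?thesis unfolding T_def by (simp add: ennreal_mult' mult_ac)
    qed
    have "(\<integral>\<^sup>+\<omega>. T j m \<omega> \<partial>M) = ennreal (exp t) * (\<integral>\<^sup>+\<omega>. ennreal (indicator (B j) (R \<omega>) * (\<Prod>k<m. exp (- min (X k \<omega>) (s j)))) \<partial>M)"
      unfolding eq by (rule nn_integral_cmult) measurable
    also have "(\<integral>\<^sup>+\<omega>. ennreal (indicator (B j) (R \<omega>) * (\<Prod>k<m. exp (- min (X k \<omega>) (s j)))) \<partial>M)
       = emeasure M (R -` B j \<inter> space M) * (\<Prod>k<m. \<integral>\<^sup>+\<omega>. ennreal (exp (- min (X k \<omega>) (s j))) \<partial>M)"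
      by (rule P.indep_expect[OF assms(7) Bsets])
    also have "(\<Prod>k<m. \<integral>\<^sup>+\<omega>. ennreal (exp (- min (X k \<omega>) (s j))) \<partial>M) \<le> (\<Prod>k<m. ennreal (q j))"
    proof (rule prod_mono_ennreal)
      fix k
      show "(\<integral>\<^sup>+\<omega>. ennreal (exp (- min (X k \<omega>) (s j))) \<partial>M) \<le> ennreal (q j)"
        using P.phi_bound[OF DX[of k] l s_pos[of j]] by (simp add: q_def)
    qed
    also have "(\<Prod>k<m. ennreal (q j)) = ennreal (q j ^ m)"
      using q_nonneg[of j] by (simp add: ennreal_power)
    finally have "(\<integral>\<^sup>+\<omega>. T j m \<omega> \<partial>M) \<le> ennreal (exp t) * (emeasure M (R -` B j \<inter> space M) * ennreal (q j ^ m))"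
      by (simp add: mult_left_mono)
    also have "\<dots> \<le> ennreal (exp t) * (ennreal (p j) * ennreal (q j ^ m))"
      by (intro mult_left_mono mult_right_mono stepD) auto
    also have "\<dots> = ennreal (exp t * p j * q j ^ m)"
      using p_nonneg[of j] q_nonneg[of j] by (simp add: ennreal_mult mult.assoc)
    finally show ?thesis .
  qed
  have rho: "0 \<le> \<rho>" "\<rho> < 1" using ep by (auto simp: \<rho>_def)
  have stepF: "exp t * p j / (1 - q j) \<le> K * \<rho> ^ j" for j
  proof -
    have "exp t * p j / (1 - q j) \<le> exp t * p j / (s j / (2 * exp l))"
      using q_ge[of j] q_pos[of j] s_pos[of j] p_nonneg[of j]
      by (intro divide_left_mono) (auto intro!: mult_pos_pos)
    also have "\<dots> = 2 * exp (t + l) * (p j / s j)"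
      using s_pos[of j] by (simp add: exp_add field_simps)
    also have "\<dots> \<le> K * \<rho> ^ j"
    proof (cases "j = 0")
      case True
      have "1 / a \<le> 1 / a + (2 * a) powr \<epsilon>" by simp
      then have "2 * exp (t + l) * (1 / a) \<le> 2 * exp (t + l) * (1 / a + (2 * a) powr \<epsilon>)"
        by (intro mult_left_mono) auto
      then show ?thesis using True by (simp add: p_def s_def K_def)
    next
      case False
      have "p j / s j = (2 * s j) powr \<epsilon>" using False s_pos[of j] by (simp add: p_def)
      also have "(2 * s j) powr \<epsilon> = (2 * a) powr \<epsilon> * \<rho> ^ j"
        using a by (simp add: s_def powr_divide pow_powr2 \<rho>_def power_one_over field_simps)
      finally have "2 * exp (t + l) * (p j / s j) = 2 * exp (t + l) * (2 * a) powr \<epsilon> * \<rho> ^ j" by simp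
      also have "\<dots> \<le> K * \<rho> ^ j"
        using a rho by (intro mult_right_mono) (auto simp: K_def field_simps)
      finally show ?thesis .
    qed
    finally show ?thesis .
  qed
  have stepE: "(\<Sum>m. \<integral>\<^sup>+\<omega>. T j m \<omega> \<partial>M) \<le> ennreal (K * \<rho> ^ j)" for j
  proof -
    have s1: "(\<Sum>m. \<integral>\<^sup>+\<omega>. T j m \<omega> \<partial>M) \<le> (\<Sum>m. ennreal (exp t * p j * q j ^ m))"
      by (rule suminf_le[OF stepC summableI summableI])
    have s2: "(\<Sum>m. ennreal (exp t * p j * q j ^ m)) = ennreal (exp t * p j / (1 - q j))"
      by (rule geo_ennreal) (use p_nonneg[of j] q_nonneg[of j] q_pos[of j] in auto)
    have s3: "ennreal (exp t * p j / (1 - q j)) \<le> ennreal (K * \<rho> ^ j)"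
      by (rule ennreal_leI[OF stepF])
    show ?thesis using s1 unfolding s2 using s3 by (rule order_trans)
  qed
  have K0: "0 \<le> K" using a by (simp add: K_def)
  have "(\<integral>\<^sup>+ \<omega>. RaRT_count X R t \<omega> \<partial>M) \<le> (\<Sum>j. ennreal (K * \<rho> ^ j))"
    using stepA stepB suminf_le[OF stepE] by (auto intro: summableI order_trans)
  also have "\<dots> = ennreal (K / (1 - \<rho>))"
    using geo_ennreal[OF K0 rho] by simp
  also have "\<dots> < \<infinity>" by simp
  finally show "(\<integral>\<^sup>+ \<omega>. RaRT_count X R t \<omega> \<partial>M) < \<infinity>" .
qed

end
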